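(* Let $n,k\ge1$ and $\theta>0$. Let $r_1,\dots,r_k$ be nonnegative integers with $r:=\sum_{i=1}^k r_i\le n$ and $\kappa:=\sum_{i=1}^k ir_i\le k$. Then $$\mathbf E\left[\prod_{i=1}^k\{A_{n,k}(i)\}_{r_i}\right]=\{n\}_r\{k\}_\kappa\,\frac{\sigma_{k-\kappa}((n-r)\theta)}{\sigma_k(n\theta)}\prod_{i=1}^k\left(\frac{\sigma_i(\theta)}{i!}\right)^{r_i}.$$
   Context: Let $(\phi_m)_{m\ge1}$ be nonnegative reals with $\phi_1>0$ such that $\phi(x)=\sum_{m\ge1}\phi_m x^m/m!$ has positive radius of convergence. For $\theta>0$ define the polynomials $\sigma_k(\theta)$ by $e^{\theta\phi(x)}=1+\sum_{k\ge1}\sigma_k(\theta)x^k/k!$, with $\sigma_0\equiv1$. For integers $n,k\ge1$, let $\mathbf K_{n,k}=(K_{n,k}(1),\dots,K_{n,k}(n))$ be a random vector in $\mathbb N_0^n$ with $$\mathbf P(\mathbf K_{n,k}=(k_1,\dots,k_n))=\frac{k!}{\sigma_k(n\theta)}\prod_{m=1}^n\frac{\sigma_{k_m}(\theta)}{k_m!}\quad\text{for } k_1+\dots+k_n=k.$$ For $i=0,\dots,k$ let $A_{n,k}(i):=\#\{m:K_{n,k}(m)=i\}$. The falling factorial is $\{a\}_l=a(a-1)\cdots(a-l+1)$, with $\{a\}_0=1$. *)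

theory Defs
  imports "HOL-Analysis.Analysis" "HOL-Computational_Algebra.Formal_Power_Series"
begin

definition ffact :: "real \<Rightarrow> nat \<Rightarrow> real" where
  "ffact a l = (\<Prod>j<l. a - real j)"

definition phi_fps :: "(nat \<Rightarrow> real) \<Rightarrow> real fps" where
  "phi_fps ph = Abs_fps (\<lambda>m. if m = 0 then 0 else ph m / fact m)"

definition sigma :: "(nat \<Rightarrow> real) \<Rightarrow> nat \<Rightarrow> real \<Rightarrow> real" where
  "sigma ph k \<theta> = fact k * fps_nth (fps_exp 1 oo (fps_const \<theta> * phi_fps ph)) k"

text \<open>Support of K_{n,k}: vectors (k_1,...,k_n), encoded as functions vanishing outside {1..n}.\<close>
definition compositions :: "nat \<Rightarrow> nat \<Rightarrow> (nat \<Rightarrow> nat) set" where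
  "compositions n k = {v. (\<forall>m. m \<notin> {1..n} \<longrightarrow> v m = 0) \<and> (\<Sum>m=1..n. v m) = k}"

definition prob_K :: "(nat \<Rightarrow> real) \<Rightarrow> real \<Rightarrow> nat \<Rightarrow> nat \<Rightarrow> (nat \<Rightarrow> nat) \<Rightarrow> real" where
  "prob_K ph \<theta> n k v = fact k / sigma ph k (real n * \<theta>) * (\<Prod>m=1..n. sigma ph (v m) \<theta> / fact (v m))"

definition A_count :: "nat \<Rightarrow> (nat \<Rightarrow> nat) \<Rightarrow> nat \<Rightarrow> nat" where
  "A_count n v i = card {m \<in> {1..n}. v m = i}"

definition expect_K :: "(nat \<Rightarrow> real) \<Rightarrow> real \<Rightarrow> nat \<Rightarrow> nat \<Rightarrow> ((nat \<Rightarrow> nat) \<Rightarrow> real) \<Rightarrow> real" where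
  "expect_K ph \<theta> n k X = (\<Sum>v\<in>compositions n k. prob_K ph \<theta> n k v * X v)"

end

theory Submission
  imports Defs
begin

lemma ffact_0[simp]: "ffact a 0 = 1" by (simp add: ffact_def)

lemma ffact_Suc: "ffact a (Suc l) = ffact a l * (a - real l)"
  by (simp add: ffact_def)

lemma ffact_Suc': "ffact a (Suc l) = a * ffact (a - 1) l"
  unfolding ffact_def prod.lessThan_Suc_shift by (simp add: algebra_simps)

lemma ffact_plus1: "ffact (a + 1) l = ffact a l + real l * ffact a (l - 1)"
proof (cases l)
  case 0 then show ?thesis by simp
next
  case (Suc m)
  have "ffact (a + 1) (Suc m) = (a+1) * ffact a m" by (simp add: ffact_Suc')
  also have "\<dots> = ffact a (Suc m) + real (Suc m) * ffact a m"
    by (simp add: ffact_Suc algebra_simps)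
  finally show ?thesis using Suc by simp
qed

lemma ffact_nat_zero: "n < l \<Longrightarrow> ffact (real n) l = 0"
  unfolding ffact_def by (rule prod_zero) auto

lemma ffact_fact: "m \<le> k \<Longrightarrow> ffact (real k) m = fact k / fact (k - m)"
proof (induction m)
  case 0 then show ?case by simp
next
  case (Suc m)
  have km: "k - m = Suc (k - Suc m)" using Suc.prems by simp
  have f: "fact (k - m) = (real (k - m)) * fact (k - Suc m)"
    unfolding km fact_Suc by simp
  have "ffact (real k) (Suc m) = fact k / fact (k - m) * (real k - real m)"
    using Suc by (simp add: ffact_Suc)
  also have "real k - real m = real (k - m)" using Suc.prems by simp
  also have "fact k / fact (k - m) * real (k - m) = fact k / fact (k - Suc m)"
    unfolding f using km by (simp del: of_nat_Suc)
  finally show ?case .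
qed

lemma comp_0: "compositions 0 K = (if K = 0 then {\<lambda>_. 0} else {})"
  unfolding compositions_def by auto

lemma comp_Suc: "compositions (Suc n) K =
   (\<lambda>(j,v). v(Suc n := j)) ` (SIGMA j:{..K}. compositions n (K-j))"
proof (intro equalityI subsetI)
  fix u assume u: "u \<in> compositions (Suc n) K"
  let ?v = "u(Suc n := 0)"
  have s: "(\<Sum>m=1..Suc n. u m) = (\<Sum>m=1..n. u m) + u (Suc n)" by simp
  have s2: "(\<Sum>m=1..n. ?v m) = (\<Sum>m=1..n. u m)" by (rule sum.cong) auto
  have "?v \<in> compositions n (K - u (Suc n))" "u (Suc n) \<le> K"
    using u s s2 unfolding compositions_def by auto
  moreover have "u = ?v(Suc n := u (Suc n))" by simp
  ultimately show "u \<in> (\<lambda>(j,v). v(Suc n := j)) ` (SIGMA j:{..K}. compositions n (K-j))"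
    by (intro image_eqI[where x="(u (Suc n), ?v)"]) auto
next
  fix u assume "u \<in> (\<lambda>(j,v). v(Suc n := j)) ` (SIGMA j:{..K}. compositions n (K-j))"
  then obtain j v where u: "u = v(Suc n := j)" and j: "j \<le> K" and v: "v \<in> compositions n (K - j)"
    by auto
  have s2: "(\<Sum>m=1..n. u m) = (\<Sum>m=1..n. v m)" unfolding u by (rule sum.cong) auto
  show "u \<in> compositions (Suc n) K"
    using v j s2 unfolding compositions_def u by auto
qed

lemma comp_finite: "finite (compositions n K)"
proof (induction n arbitrary: K)
  case 0 then show ?case by (simp add: comp_0)
next
  case (Suc n) then show ?case by (simp add: comp_Suc)
qed

lemma comp_zero_Suc: "v \<in> compositions n K \<Longrightarrow> v (Suc n) = 0"
  unfolding compositions_def by auto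

lemma sum_comp_Suc: "(\<Sum>u\<in>compositions (Suc n) K. f u) =
   (\<Sum>j\<le>K. \<Sum>v\<in>compositions n (K-j). f (v(Suc n := j)))"
proof -
  have inj: "inj_on (\<lambda>(j,v). v(Suc n := j)) (SIGMA j:{..K}. compositions n (K-j))"
  proof (rule inj_onI, clarify)
    fix j v j' v' assume a: "v \<in> compositions n (K - j)" "v' \<in> compositions n (K - j')"
      and e: "v(Suc n := j) = v'(Suc n := j')"
    have "j = j'" using fun_cong[OF e, of "Suc n"] by simp
    moreover have "v = v'"
    proof
      fix m show "v m = v' m" using fun_cong[OF e, of m] comp_zero_Suc[OF a(1)] comp_zero_Suc[OF a(2)]
        by (cases "m = Suc n") auto
    qed
    ultimately show "j = j' \<and> v = v'" by simp
  qed
  show ?thesis unfolding comp_Suc sum.reindex[OF inj]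
    by (simp add: sum.Sigma comp_finite split_def)
qed

lemma A_upd: "v (Suc n) = 0 \<Longrightarrow>
  A_count (Suc n) (v(Suc n := j)) i = A_count n v i + (if j = i then 1 else 0)"
proof -
  assume "v (Suc n) = 0"
  have "{m \<in> {1..Suc n}. (v(Suc n := j)) m = i} = {m \<in> {1..n}. v m = i} \<union> (if j = i then {Suc n} else {})"
    by auto
  then show ?thesis unfolding A_count_def by (simp add: card_insert_if)
qed

lemma prod_ffact_split:
  assumes "finite I"
  shows "(\<Prod>i\<in>I. ffact (a i + (if j = i then 1 else 0)) (r i)) =
    (\<Prod>i\<in>I. ffact (a i) (r i)) + (if j \<in> I then real (r j) * (\<Prod>i\<in>I. ffact (a i) ((r(j := r j - 1)) i)) else 0)"
proof (cases "j \<in> I")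
  case False
  then show ?thesis by (auto intro!: prod.cong)
next
  case True
  have e1: "(\<Prod>i\<in>I-{j}. ffact (a i + (if j = i then 1 else 0)) (r i)) = (\<Prod>i\<in>I-{j}. ffact (a i) (r i))"
    by (rule prod.cong) auto
  have e2: "(\<Prod>i\<in>I-{j}. ffact (a i) ((r(j := r j - 1)) i)) = (\<Prod>i\<in>I-{j}. ffact (a i) (r i))"
    by (rule prod.cong) auto
  show ?thesis using True assms
    using ffact_plus1[of "a j" "r j"]
    by (simp add: prod.remove[OF assms True] e1 e2 algebra_simps)
qed

definition Ff :: "(nat \<Rightarrow> real) \<Rightarrow> nat set \<Rightarrow> nat \<Rightarrow> nat \<Rightarrow> (nat \<Rightarrow> nat) \<Rightarrow> real" where
  "Ff w I n K r = (\<Sum>v\<in>compositions n K. (\<Prod>m=1..n. w (v m)) * (\<Prod>i\<in>I. ffact (real (A_count n v i)) (r i)))"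

definition Cf :: "(nat \<Rightarrow> real) \<Rightarrow> nat set \<Rightarrow> nat \<Rightarrow> nat \<Rightarrow> (nat \<Rightarrow> nat) \<Rightarrow> real" where
  "Cf w I n K r = (if (\<Sum>i\<in>I. i * r i) \<le> K then fps_nth (Abs_fps w ^ (n - sum r I)) (K - (\<Sum>i\<in>I. i * r i)) else 0)"

definition Pf :: "(nat \<Rightarrow> real) \<Rightarrow> nat set \<Rightarrow> (nat \<Rightarrow> nat) \<Rightarrow> real" where
  "Pf w I r = (\<Prod>i\<in>I. w i ^ r i)"

lemma Ff_step:
  assumes I: "finite I"
  shows "Ff w I (Suc n) K r = (\<Sum>j\<le>K. w j * Ff w I n (K-j) r)
     + (\<Sum>j\<le>K. if j \<in> I then w j * real (r j) * Ff w I n (K-j) (r(j := r j - 1)) else 0)"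
proof -
  have pr: "(\<Prod>m=1..Suc n. w ((v(Suc n := j)) m)) = (\<Prod>m=1..n. w (v m)) * w j" for v j
  proof -
    have "{1..Suc n} = insert (Suc n) {1..n}" by auto
    then have "(\<Prod>m=1..Suc n. w ((v(Suc n := j)) m)) = w j * (\<Prod>m=1..n. w ((v(Suc n := j)) m))"
      by simp
    also have "(\<Prod>m=1..n. w ((v(Suc n := j)) m)) = (\<Prod>m=1..n. w (v m))"
      by (rule prod.cong) auto
    finally show ?thesis by simp
  qed
  have "Ff w I (Suc n) K r = (\<Sum>j\<le>K. \<Sum>v\<in>compositions n (K-j).
      (\<Prod>m=1..n. w (v m)) * w j * (\<Prod>i\<in>I. ffact (real (A_count n v i) + (if j = i then 1 else 0)) (r i)))"
    unfolding Ff_def sum_comp_Suc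
    by (intro sum.cong refl) (simp add: pr A_upd comp_zero_Suc of_nat_add if_distrib add.commute cong: if_cong)
  also have "\<dots> = (\<Sum>j\<le>K. w j * Ff w I n (K-j) r +
      (if j \<in> I then w j * real (r j) * Ff w I n (K-j) (r(j := r j - 1)) else 0))"
    unfolding Ff_def prod_ffact_split[OF I]
    by (intro sum.cong refl) (simp add: sum.distrib sum_distrib_left algebra_simps)
  finally show ?thesis by (simp add: sum.distrib)
qed

lemma T1:
  assumes "sum r I \<le> n"
  shows "(\<Sum>j\<le>K. w j * Cf w I n (K-j) r) = Cf w I (Suc n) K r"
proof (cases "(\<Sum>i\<in>I. i * r i) \<le> K")
  case False
  then show ?thesis unfolding Cf_def by (auto intro!: sum.neutral)
next
  case True
  define \<kappa> where "\<kappa> = (\<Sum>i\<in>I. i * r i)"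
  define G where "G = Abs_fps w ^ (n - sum r I)"
  have "Cf w I (Suc n) K r = fps_nth (Abs_fps w * G) (K - \<kappa>)"
    unfolding Cf_def G_def \<kappa>_def using True assms by (simp add: Suc_diff_le)
  also have "\<dots> = (\<Sum>j=0..K-\<kappa>. w j * fps_nth G (K - \<kappa> - j))"
    by (simp add: fps_mult_nth)
  also have "\<dots> = (\<Sum>j\<le>K. w j * Cf w I n (K-j) r)"
    unfolding Cf_def G_def \<kappa>_def[symmetric]
    using True by (intro sum.mono_neutral_cong_right[symmetric]) (auto simp: diff_diff_left add.commute \<kappa>_def)
  finally show ?thesis ..
qed

lemma T2_term:
  assumes I: "finite I" and j: "j \<in> I" "j \<le> K"
  shows "w j * real (r j) * (ffact x (sum (r(j := r j - 1)) I) * Pf w I (r(j := r j - 1)) * Cf w I n (K-j) (r(j := r j - 1)))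
    = real (r j) * (ffact x (sum r I - 1) * Pf w I r * Cf w I (Suc n) K r)"
proof (cases "r j = 0")
  case True then show ?thesis by simp
next
  case False
  define r' where "r' = r(j := r j - 1)"
  have e1: "sum r' (I - {j}) = sum r (I - {j})" "(\<Sum>i\<in>I-{j}. i * r' i) = (\<Sum>i\<in>I-{j}. i * r i)"
    "Pf w (I-{j}) r' = Pf w (I-{j}) r"
    unfolding r'_def Pf_def by (auto intro!: sum.cong prod.cong)
  have R: "sum r' I = sum r I - 1" "sum r I \<ge> 1"
    using e1 False unfolding sum.remove[OF I j(1)] by (auto simp: r'_def)
  have jj: "j \<le> j * r j" using False by (cases "r j") auto
  have ka2: "(\<Sum>i\<in>I. i * r i) \<ge> j"
    unfolding sum.remove[OF I j(1)] using jj by linarith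
  have ka: "(\<Sum>i\<in>I. i * r' i) = (\<Sum>i\<in>I. i * r i) - j" "(\<Sum>i\<in>I. i * r i) \<ge> j"
    using e1 False jj ka2 unfolding sum.remove[OF I j(1)] by (auto simp: r'_def diff_mult_distrib2)
  have P: "w j * Pf w I r' = Pf w I r"
    using e1 False unfolding Pf_def prod.remove[OF I j(1)] 
    by (simp add: r'_def power_Suc[symmetric] del: power_Suc)
  have C: "Cf w I n (K-j) r' = Cf w I (Suc n) K r"
    unfolding Cf_def using R ka j(2) by auto
  show ?thesis unfolding r'_def[symmetric] R(1) C P[symmetric] by (simp add: algebra_simps)
qed

lemma sumI_le:
  assumes I: "finite I" and k: "(\<Sum>i\<in>I. i * r i) \<le> K"
  shows "(\<Sum>j\<le>K. if j \<in> I then real (r j) else 0) = real (sum r I)"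
proof -
  have "(\<Sum>j\<le>K. if j \<in> I then real (r j) else 0) = (\<Sum>j\<in>{..K} \<inter> I. real (r j))"
    by (simp add: sum.inter_restrict)
  also have "\<dots> = (\<Sum>j\<in>I. real (r j))"
  proof (rule sum.mono_neutral_left[OF I])
    show "\<forall>i\<in>I - {..K} \<inter> I. real (r i) = 0"
    proof
      fix i assume i: "i \<in> I - {..K} \<inter> I"
      have "i * r i \<le> (\<Sum>i\<in>I. i * r i)" using i I by (intro member_le_sum) auto
      then have "i * r i \<le> K" using k by linarith
      then show "real (r i) = 0" using i by (cases "r i") auto
    qed
  qed auto
  finally show ?thesis by simp
qed

lemma main:
  assumes I: "finite I"
  shows "Ff w I n K r = ffact (real n) (sum r I) * Pf w I r * Cf w I n K r"
proof (induction n arbitrary: K r)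
  case 0
  have A0: "A_count 0 v i = 0" for v i unfolding A_count_def by simp
  have F0: "Ff w I 0 K r = (if K = 0 then (\<Prod>i\<in>I. ffact 0 (r i)) else 0)"
    unfolding Ff_def comp_0 by (simp add: A0)
  show ?case
  proof (cases "sum r I = 0")
    case True
    then have z: "\<forall>i\<in>I. r i = 0" using I by simp
    have "(\<Prod>i\<in>I. ffact 0 (r i)) = 1" using z by (simp add: prod.neutral)
    moreover have "Pf w I r = 1" using z unfolding Pf_def by (simp add: prod.neutral)
    moreover have "(\<Sum>i\<in>I. i * r i) = 0" using z by simp
    ultimately show ?thesis unfolding F0 Cf_def using True by simp
  next
    case False
    then obtain i where i: "i \<in> I" "r i > 0" using I by (metis sum.neutral neq0_conv)
    have "(\<Prod>i\<in>I. ffact 0 (r i)) = 0"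
      using i I ffact_nat_zero[of 0 "r i"] by (intro prod_zero) auto
    moreover have "ffact (real 0) (sum r I) = 0" using False by (intro ffact_nat_zero) simp
    ultimately show ?thesis unfolding F0 by simp
  qed
next
  case (Suc n)
  define R where "R = sum r I"
  define X where "X = Pf w I r * Cf w I (Suc n) K r"
  have first: "(\<Sum>j\<le>K. w j * Ff w I n (K-j) r) = ffact (real n) R * X"
  proof (cases "R \<le> n")
    case True
    have "(\<Sum>j\<le>K. w j * Ff w I n (K-j) r) = ffact (real n) R * Pf w I r * (\<Sum>j\<le>K. w j * Cf w I n (K-j) r)"
      unfolding Suc.IH R_def sum_distrib_left by (simp add: algebra_simps)
    then show ?thesis using T1[OF True[unfolded R_def], of w K] unfolding X_def R_def by simp
  next
    case False
    then have "ffact (real n) R = 0" by (intro ffact_nat_zero) simp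
    then show ?thesis unfolding Suc.IH R_def by simp
  qed
  have second: "(\<Sum>j\<le>K. if j \<in> I then w j * real (r j) * Ff w I n (K-j) (r(j := r j - 1)) else 0)
      = real R * ffact (real n) (R - 1) * X"
  proof -
    have "(\<Sum>j\<le>K. if j \<in> I then w j * real (r j) * Ff w I n (K-j) (r(j := r j - 1)) else 0)
       = (\<Sum>j\<le>K. if j \<in> I then real (r j) * (ffact (real n) (R - 1) * X) else 0)"
      unfolding Suc.IH R_def X_def using T2_term[OF I] by (intro sum.cong refl) auto
    also have "\<dots> = (\<Sum>j\<le>K. if j \<in> I then real (r j) else 0) * (ffact (real n) (R - 1) * X)"
      unfolding sum_distrib_right by (intro sum.cong) auto
    also have "\<dots> = real R * ffact (real n) (R - 1) * X"
    proof (cases "(\<Sum>i\<in>I. i * r i) \<le> K")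
      case True then show ?thesis using sumI_le[OF I True] unfolding R_def by simp
    next
      case False then have "X = 0" unfolding X_def Cf_def by simp
      then show ?thesis by simp
    qed
    finally show ?thesis .
  qed
  have ff: "ffact (real (Suc n)) R = ffact (real n) R + real R * ffact (real n) (R - 1)"
    using ffact_plus1[of "real n" R] by (simp add: add.commute)
  show ?case unfolding Ff_step[OF I] first second ff X_def R_def[symmetric]
    by (simp add: algebra_simps)
qed

lemma exp_compose_scale:
  fixes p :: "real fps"
  shows "fps_exp a oo (fps_const t * p) = fps_exp 1 oo (fps_const (a * t) * p)"
proof (rule fps_ext)
  fix N
  show "fps_nth (fps_exp a oo (fps_const t * p)) N = fps_nth (fps_exp 1 oo (fps_const (a * t) * p)) N"
    unfolding fps_compose_nth
  proof (intro sum.cong refl)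
    fix i
    have e: "(fps_const c * p) ^ i = fps_const (c ^ i) * p ^ i" for c
      by (simp add: power_mult_distrib)
    show "fps_nth (fps_exp a) i * fps_nth ((fps_const t * p) ^ i) N =
          fps_nth (fps_exp 1) i * fps_nth ((fps_const (a * t) * p) ^ i) N"
      unfolding e fps_mult_left_const_nth fps_exp_nth by (simp add: power_mult_distrib)
  qed
qed

lemma W_eq: "Abs_fps (\<lambda>j. sigma ph j x / fact j) = fps_exp 1 oo (fps_const x * phi_fps ph)"
proof (rule fps_ext)
  fix j
  define E where "E = fps_exp 1 oo (fps_const x * phi_fps ph)"
  have "sigma ph j x / fact j = fps_nth E j" unfolding sigma_def E_def[symmetric] by simp
  then show "fps_nth (Abs_fps (\<lambda>j. sigma ph j x / fact j)) j = fps_nth (fps_exp 1 oo (fps_const x * phi_fps ph)) j"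
    unfolding E_def by simp
qed

lemma W_power: "fps_nth (Abs_fps (\<lambda>j. sigma ph j t / fact j) ^ m) K = sigma ph K (real m * t) / fact K"
proof -
  have g0: "fps_nth (fps_const t * phi_fps ph) 0 = 0" by (simp add: phi_fps_def)
  have "Abs_fps (\<lambda>j. sigma ph j t / fact j) ^ m = fps_exp 1 ^ m oo (fps_const t * phi_fps ph)"
    unfolding W_eq fps_compose_power[OF g0] ..
  also have "\<dots> = fps_exp 1 oo (fps_const (real m * t) * phi_fps ph)"
    unfolding fps_exp_power_mult using exp_compose_scale[of "of_nat m * 1" t "phi_fps ph"] by simp
  also have "\<dots> = Abs_fps (\<lambda>j. sigma ph j (real m * t) / fact j)"
    unfolding W_eq ..
  finally show ?thesis by simp
qed

theorem proposition5:
  fixes ph :: "nat \<Rightarrow> real" and \<theta> :: real and n k :: nat and r :: "nat \<Rightarrow> nat"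
  assumes ph_nonneg: "\<And>m. m \<ge> 1 \<Longrightarrow> ph m \<ge> 0"
    and ph1: "ph 1 > 0"
    and radius: "\<exists>R>0. summable (\<lambda>m. ph m / fact m * R ^ m)"
    and n: "n \<ge> 1" and k: "k \<ge> 1" and theta: "\<theta> > 0"
    and r_le: "(\<Sum>i=1..k. r i) \<le> n"
    and kappa_le: "(\<Sum>i=1..k. i * r i) \<le> k"
  shows "expect_K ph \<theta> n k (\<lambda>v. \<Prod>i=1..k. ffact (real (A_count n v i)) (r i))
    = ffact (real n) (\<Sum>i=1..k. r i) * ffact (real k) (\<Sum>i=1..k. i * r i)
      * sigma ph (k - (\<Sum>i=1..k. i * r i)) (real (n - (\<Sum>i=1..k. r i)) * \<theta>)
      / sigma ph k (real n * \<theta>)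
      * (\<Prod>i=1..k. (sigma ph i \<theta> / fact i) ^ r i)"
proof -
  define w where "w = (\<lambda>j. sigma ph j \<theta> / fact j)"
  define I where "I = {1..k}"
  define R where "R = (\<Sum>i=1..k. r i)"
  define \<kappa> where "\<kappa> = (\<Sum>i=1..k. i * r i)"
  have fI: "finite I" unfolding I_def by simp
  have "expect_K ph \<theta> n k (\<lambda>v. \<Prod>i=1..k. ffact (real (A_count n v i)) (r i))
      = fact k / sigma ph k (real n * \<theta>) * Ff w I n k r"
    unfolding expect_K_def prob_K_def Ff_def sum_distrib_left w_def I_def
    by (intro sum.cong refl) (simp add: algebra_simps)
  also have "Ff w I n k r = ffact (real n) R * Pf w I r * Cf w I n k r"
    unfolding R_def I_def by (rule main) simp
  also have "Cf w I n k r = sigma ph (k - \<kappa>) (real (n - R) * \<theta>) / fact (k - \<kappa>)"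
    unfolding Cf_def I_def using kappa_le unfolding \<kappa>_def[symmetric] R_def[symmetric]
    by (simp add: w_def W_power)
  also have "Pf w I r = (\<Prod>i=1..k. (sigma ph i \<theta> / fact i) ^ r i)"
    unfolding Pf_def w_def I_def ..
  finally have L: "expect_K ph \<theta> n k (\<lambda>v. \<Prod>i=1..k. ffact (real (A_count n v i)) (r i)) =
     fact k / sigma ph k (real n * \<theta>) * (ffact (real n) R * (\<Prod>i=1..k. (sigma ph i \<theta> / fact i) ^ r i)
       * (sigma ph (k - \<kappa>) (real (n - R) * \<theta>) / fact (k - \<kappa>)))" .
  have ffk: "ffact (real k) \<kappa> = fact k / fact (k - \<kappa>)"
    using kappa_le unfolding \<kappa>_def by (rule ffact_fact)
  show ?thesis unfolding L R_def[symmetric] \<kappa>_def[symmetric] ffk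
    by (simp add: algebra_simps)
qed

end
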